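(* Let $f:\mathbb{R}^n\to\mathbb{R}$ and $c:\mathbb{R}^n\to\mathbb{R}^m$ ($m<n$) be smooth, with $g=\nabla f$ and Jacobian $J=\nabla c$. Suppose noisy evaluations satisfy, for all $x$, $|\tilde f(x)-f(x)|\le\epsilon_f$, $\|\tilde c(x)-c(x)\|_1\le\epsilon_c$, $\|\tilde g(x)-g(x)\|\le\epsilon_g$, $\|\tilde J(x)-J(x)\|_{1,2}\le\epsilon_J$. Let $\{x_k\}$ be a sequence with $\sigma_{\min}(J_k)\ge\gamma>\epsilon_J$ for all $k$; set $\delta=1/(\gamma-\epsilon_J)$, $\eta=1/\gamma$. Let $0<\beta_k\le b_u$, let $d_k$ solve $\min_d\tfrac12\beta_k\|d\|^2+\tilde g_k^Td$ s.t. $\tilde c_k+\tilde J_kd=0$; fix $\tau\in(0,1)$ and suppose $\pi_k\ge\frac{1}{1-\tau}\|(\tilde J_k\tilde J_k^T)^{-1}\tilde J_k\tilde g_k\|_\infty$ for every $k$. Define $\psi_\pi(x)=\frac{1}{b_u}\|P(x)g(x)\|^2+\pi\tau\|c(x)\|_1$ and $$E(x,\beta,\pi)=\frac{1}{\beta}\big(\|g(x)\|^2\eta\epsilon_J+\epsilon_g\|g(x)\|\big)+\epsilon_g\delta(\|c(x)\|_1+\epsilon_c)+\pi\Big[(2-\tau)\epsilon_c+\epsilon_J\Big(\delta(\|c(x)\|_1+\epsilon_c)+\frac{1}{\beta}\big(\|P(x)g(x)\|+\|g(x)\|\eta\epsilon_J+\epsilon_g\big)\Big)\Big].$$ Choose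 any $\theta_1\in[0,1)$. For any $x_k$ such that $\psi_{\pi_k}(x_k)\ge E(x_k,\beta_k,\pi_k)/(1-\theta_1)$, we have $$\ell(x_k;d_k)\le-\theta_1\Big(\frac{1}{\beta_k}g_k^TP_kg_k+\tau\pi_k\|c_k\|_1\Big)\le-\theta_1\psi_{\pi_k}(x_k),$$ where $\ell(x_k;d_k)=g_k^Td_k+\pi_k\|c_k+J_kd_k\|_1-\pi_k\|c_k\|_1$.
   Context: $\|\cdot\|$ is the Euclidean norm; $\|A\|_{1,2}=\sup_{x\ne0}\|Ax\|_1/\|x\|$; $\sigma_{\min}$ is the smallest singular value. Subscript $k$ denotes evaluation at $x_k$. $P(x)=I-J(x)^T(J(x)J(x)^T)^{-1}J(x)$ and $P_k=P(x_k)$. The constant $b_u$ is an upper bound on $\beta_k$ for all $k$. *)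

theory Defs
  imports "HOL-Analysis.Analysis"
begin

definition l1norm :: "real ^ 'm \<Rightarrow> real" where
  "l1norm v = (\<Sum>i\<in>UNIV. \<bar>v $ i\<bar>)"

definition opnorm_1_2 :: "real ^ 'n ^ 'm \<Rightarrow> real" where
  "opnorm_1_2 A = (SUP x\<in>{x. x \<noteq> 0}. l1norm (A *v x) / norm x)"

text \<open>Smallest singular value of an m x n matrix J with m < n
  (the m singular values of J): min over unit y in R^m of norm (J^T y).\<close>
definition sigma_min :: "real ^ 'n ^ 'm \<Rightarrow> real" where
  "sigma_min J = (INF y\<in>{y. norm y = 1}. norm (transpose J *v y))"

definition projP :: "real ^ 'n ^ 'm \<Rightarrow> real ^ 'n ^ 'n" where
  "projP J = mat 1 - transpose J ** matrix_inv (J ** transpose J) ** J"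

end

theory Submission imports Defs begin

declare transpose_matrix_vector[simp del] vector_transpose_matrix[simp del]

lemma inner_mv: "(A *v (x::real^'n)) \<bullet> (y::real^'m) = x \<bullet> (transpose A *v y)"
  by (metis dot_lmul_matrix inner_commute transpose_matrix_vector)

lemma dim_range_inj:
  fixes A :: "real^'m^'n"
  assumes "inj (\<lambda>y. A *v y)"
  shows "dim (range (\<lambda>y. A *v y)) = dim (UNIV :: (real^'m) set)"
  using dim_image_eq[of "\<lambda>y. A *v y" UNIV] assms matrix_vector_mul_linear
  by (metis inj_on_subset subset_UNIV)

lemma null_orth:
  fixes A :: "real^'n^'m"
  shows "{x. A *v x = 0} = {y \<in> UNIV. \<forall>x \<in> range (\<lambda>u. transpose A *v u). orthogonal x y}"
proof (auto simp: orthogonal_def)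
  fix x u assume "A *v x = 0"
  then show "(transpose A *v u) \<bullet> x = 0" by (metis inner_mv inner_commute inner_zero_left)
next
  fix y assume "\<forall>u. (transpose A *v u) \<bullet> y = 0"
  then have "(transpose A *v (A *v y)) \<bullet> y = 0" by blast
  then have "(A *v y) \<bullet> (A *v y) = 0" by (metis inner_mv inner_commute)
  then show "A *v y = 0" by simp
qed

lemma dim_null_eq:
  fixes A B :: "real^'n^'m"
  assumes "inj (\<lambda>y. transpose A *v y)" "inj (\<lambda>y. transpose B *v y)"
  shows "dim {x. A *v x = 0} = dim {x. B *v x = 0}"
proof -
  have "dim {x. A *v x = 0} + dim (range (\<lambda>u. transpose A *v u)) = dim (UNIV::(real^'n) set)"
    unfolding null_orth
    by (rule dim_subspace_orthogonal_to_vectors) (auto intro: subspace_UNIV real_vector.linear_subspace_image matrix_vector_mul_linear)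
  moreover
  have "dim {x. B *v x = 0} + dim (range (\<lambda>u. transpose B *v u)) = dim (UNIV::(real^'n) set)"
    unfolding null_orth
    by (rule dim_subspace_orthogonal_to_vectors) (auto intro: subspace_UNIV real_vector.linear_subspace_image matrix_vector_mul_linear)
  ultimately show ?thesis using dim_range_inj[OF assms(1)] dim_range_inj[OF assms(2)] by simp
qed

lemma sq_le: "0 \<le> (x::real) \<Longrightarrow> 0 \<le> c \<Longrightarrow> x^2 \<le> x*c \<Longrightarrow> x \<le> c"
proof (rule ccontr)
  assume a: "0 \<le> x" "0 \<le> c" "x^2 \<le> x*c" "\<not> x \<le> c"
  then have "x * c < x * x" by (intro mult_strict_left_mono) auto
  then show False using a by (simp add: power2_eq_square)
qed

locale frr =
  fixes A :: "real^'n^'m" and s :: real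
  assumes s_pos: "0 < s" and lb: "\<And>y. s * norm y \<le> norm (transpose A *v y)"
begin

definition "G = matrix_inv (A ** transpose A)"

lemma AAt_inj: "(A ** transpose A) *v y = 0 \<Longrightarrow> y = 0"
proof -
  assume h: "(A ** transpose A) *v y = 0"
  have "(transpose A *v y) \<bullet> (transpose A *v y) = y \<bullet> ((A ** transpose A) *v y)"
    by (metis inner_mv inner_commute matrix_vector_mul_assoc)
  also have "\<dots> = 0" using h by simp
  finally have "transpose A *v y = 0" by simp
  then have "s * norm y \<le> 0" using lb[of y] by simp
  then show "y = 0" using s_pos by (simp add: mult_le_0_iff)
qed

lemma G: "(A ** transpose A) ** G = mat 1" "G ** (A ** transpose A) = mat 1"
proof -
  have "\<exists>B. B ** (A ** transpose A) = mat 1"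
    using matrix_left_invertible_ker AAt_inj by blast
  then have "invertible (A ** transpose A)" using invertible_left_inverse by blast
  then have "\<exists>A'. (A ** transpose A) ** A' = mat 1 \<and> A' ** (A ** transpose A) = mat 1"
    unfolding invertible_def by blast
  then have "(A ** transpose A) ** G = mat 1 \<and> G ** (A ** transpose A) = mat 1"
    unfolding G_def matrix_inv_def by (rule someI_ex)
  then show "(A ** transpose A) ** G = mat 1" "G ** (A ** transpose A) = mat 1" by auto
qed

lemma G_sym: "transpose G = G"
proof -
  have tA: "transpose (A ** transpose A) = A ** transpose A"
    by (simp add: matrix_transpose_mul)
  have "transpose G ** (A ** transpose A) = mat 1"
    using arg_cong[OF G(1), of transpose] by (simp add: matrix_transpose_mul tA)
  then have "transpose G = transpose G ** ((A ** transpose A) ** G)"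
    using G(1) by (simp add: matrix_mul_rid)
  also have "\<dots> = (transpose G ** (A ** transpose A)) ** G" by (simp add: matrix_mul_assoc)
  also have "\<dots> = G" using \<open>transpose G ** (A ** transpose A) = mat 1\<close> by (simp add: matrix_mul_lid)
  finally show ?thesis .
qed

lemma Gv: "A *v (transpose A *v (G *v w)) = w"
  by (metis G(1) matrix_vector_mul_assoc matrix_vector_mul_lid)

lemma Gv2: "G *v (A *v (transpose A *v w)) = w"
  by (metis G(2) matrix_vector_mul_assoc matrix_vector_mul_lid)

lemma G_inner: "(G *v u) \<bullet> w = u \<bullet> (G *v w)"
  by (metis G_sym inner_mv inner_commute)

abbreviation "P \<equiv> projP A"

lemma P_eq: "P *v v = v - transpose A *v (G *v (A *v v))"
  unfolding projP_def G_def[symmetric]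
  by (simp add: matrix_vector_mult_diff_rdistrib matrix_vector_mul_assoc matrix_mul_assoc)

lemma r_eq: "v - P *v v = transpose A *v (G *v (A *v v))"
  by (simp add: P_eq)

lemma A_P: "A *v (P *v v) = 0"
  by (simp add: P_eq matrix_vector_mult_diff_distrib Gv)

lemma P_null: "A *v w = 0 \<Longrightarrow> P *v w = w"
  by (simp add: P_eq matrix_vector_mult_0_right)

lemma P_At: "P *v (transpose A *v u) = 0"
  by (simp add: P_eq Gv2)

lemma P_sym: "(P *v v) \<bullet> w = v \<bullet> (P *v w)"
proof -
  have "(transpose A *v (G *v (A *v v))) \<bullet> w = v \<bullet> (transpose A *v (G *v (A *v w)))"
    by (metis inner_mv inner_commute G_inner)
  then show ?thesis by (simp add: P_eq inner_diff_left inner_diff_right)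
qed

lemma P_idem: "P *v (P *v v) = P *v v"
  by (rule P_null[OF A_P])

lemma P_inner: "v \<bullet> (P *v v) = (norm (P *v v))^2"
  by (metis P_idem P_sym power2_norm_eq_inner)

lemma P_pyth: "(norm v)^2 = (norm (P *v v))^2 + (norm (v - P *v v))^2"
proof -
  have "(P *v v) \<bullet> (v - P *v v) = 0"
    using P_inner[of v] by (simp add: inner_diff_right inner_commute power2_norm_eq_inner)
  then have "v \<bullet> v = (P *v v) \<bullet> (P *v v) + (v - P *v v) \<bullet> (v - P *v v)"
    by (simp add: inner_diff_left inner_diff_right inner_commute)
  then show ?thesis by (simp add: power2_norm_eq_inner)
qed

lemma P_norm: "norm (P *v v) \<le> norm v"
  using P_pyth[of v] by (smt (verit) norm_ge_zero power2_le_imp_le zero_le_power2)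

lemma r_norm: "norm (v - P *v v) \<le> norm v"
  using P_pyth[of v] by (smt (verit) norm_ge_zero power2_le_imp_le zero_le_power2)

lemma rr_inner: "(v - P *v v) \<bullet> (w - P *v w) = v \<bullet> (w - P *v w)"
  by (simp add: inner_diff_left inner_diff_right P_sym P_idem)

lemma pinv_bound: "norm (transpose A *v (G *v w)) \<le> norm w / s"
proof -
  define u where "u = G *v w"
  have "(norm (transpose A *v u))^2 = u \<bullet> w"
    by (metis u_def Gv inner_mv inner_commute power2_norm_eq_inner)
  also have "\<dots> \<le> norm u * norm w" by (rule norm_cauchy_schwarz)
  also have "\<dots> \<le> (norm (transpose A *v u) / s) * norm w"
  proof (rule mult_right_mono)
    show "norm u \<le> norm (transpose A *v u) / s" using lb[of u] s_pos by (simp add: pos_le_divide_eq mult.commute)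
  qed simp
  finally have sq: "(norm (transpose A *v u))^2 \<le> norm (transpose A *v u) * (norm w / s)" by simp
  have "0 \<le> norm w / s" using s_pos by simp
  from sq_le[OF norm_ge_zero this sq] show ?thesis by (simp only: u_def)
qed

end


lemma l1_ge_norm: "norm v \<le> l1norm v"
  unfolding l1norm_def by (rule norm_le_l1_cart)

lemma l1_nonneg: "0 \<le> l1norm v"
  unfolding l1norm_def by (simp add: sum_nonneg)

lemma l1_triangle: "l1norm (a + b) \<le> l1norm a + l1norm b"
  unfolding l1norm_def by (simp add: sum.distrib[symmetric] sum_mono abs_triangle_ineq)

lemma l1_minus_commute: "l1norm (a - b) = l1norm (b - a)"
  unfolding l1norm_def by (simp add: abs_minus_commute)

lemma l1_le_card: "l1norm (v::real^'m) \<le> real CARD('m) * norm v"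
proof -
  have "l1norm v \<le> (\<Sum>i\<in>(UNIV::'m set). norm v)"
    unfolding l1norm_def by (intro sum_mono) (simp add: component_le_norm_cart)
  then show ?thesis by simp
qed

lemma inner_infnorm: "\<bar>(w::real^'m) \<bullet> v\<bar> \<le> infnorm w * l1norm v"
proof -
  have "\<bar>w \<bullet> v\<bar> = \<bar>\<Sum>i\<in>UNIV. w$i * v$i\<bar>" by (simp add: inner_vec_def)
  also have "\<dots> \<le> (\<Sum>i\<in>UNIV. \<bar>w$i * v$i\<bar>)" by (rule sum_abs)
  also have "\<dots> \<le> (\<Sum>i\<in>UNIV. infnorm w * \<bar>v$i\<bar>)"
    by (intro sum_mono) (simp add: abs_mult mult_right_mono component_le_infnorm_cart)
  finally show ?thesis by (simp add: l1norm_def sum_distrib_left)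
qed

lemma opnorm_bound:
  fixes E :: "real^'n^'m"
  assumes "opnorm_1_2 E \<le> e"
  shows "l1norm (E *v x) \<le> e * norm x"
proof (cases "x = 0")
  case True then show ?thesis by (simp add: l1norm_def)
next
  case False
  obtain K where K: "\<And>x. norm (E *v x) \<le> norm x * K"
    using bounded_linear.bounded[OF matrix_vector_mul_bounded_linear[of E]] by blast
  have bdd: "bdd_above ((\<lambda>x. l1norm (E *v x) / norm x) ` {x. x \<noteq> 0})"
  proof (rule bdd_aboveI2)
    fix y :: "real^'n" assume "y \<in> {x. x \<noteq> 0}"
    then have y: "norm y > 0" by simp
    have "l1norm (E *v y) \<le> real CARD('m) * (norm y * K)"
      using l1_le_card[of "E *v y"] K[of y] by (smt (verit) mult_left_mono of_nat_0_le_iff)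
    then show "l1norm (E *v y) / norm y \<le> real CARD('m) * K"
      using y by (simp add: divide_le_eq mult.commute mult.left_commute)
  qed
  have "l1norm (E *v x) / norm x \<le> opnorm_1_2 E"
    unfolding opnorm_1_2_def using False by (intro cSUP_upper bdd) auto
  then have "l1norm (E *v x) / norm x \<le> e" using assms by linarith
  then show ?thesis using False by (simp add: divide_le_eq mult.commute)
qed

lemma sigma_bound:
  fixes J :: "real^'n^'m"
  assumes "\<gamma> \<le> sigma_min J"
  shows "\<gamma> * norm y \<le> norm (transpose J *v y)"
proof (cases "y = 0")
  case True then show ?thesis by simp
next
  case False
  define u where "u = (1 / norm y) *\<^sub>R y"
  have u1: "norm u = 1" using False by (simp add: u_def)
  have "sigma_min J \<le> norm (transpose J *v u)"
    unfolding sigma_min_def using u1 by (intro cINF_lower) (auto intro: bdd_belowI[where m=0])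
  also have "transpose J *v u = (1 / norm y) *\<^sub>R (transpose J *v y)"
    by (simp add: u_def matrix_vector_mult_scaleR)
  finally have "\<gamma> \<le> norm (transpose J *v y) / norm y" using assms by simp
  then show ?thesis using False by (simp add: le_divide_eq)
qed

lemma transpose_bound:
  fixes E :: "real^'n^'m"
  assumes "\<And>x. norm (E *v x) \<le> e * norm x" "0 \<le> e"
  shows "norm (transpose E *v u) \<le> e * norm u"
proof -
  have "(norm (transpose E *v u))^2 = u \<bullet> (E *v (transpose E *v u))"
    by (metis inner_mv inner_commute power2_norm_eq_inner transpose_transpose)
  also have "\<dots> \<le> norm u * norm (E *v (transpose E *v u))" by (rule norm_cauchy_schwarz)
  also have "\<dots> \<le> norm u * (e * norm (transpose E *v u))"
    by (intro mult_left_mono assms) simp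
  finally have sq: "(norm (transpose E *v u))^2 \<le> norm (transpose E *v u) * (e * norm u)"
    by (simp add: algebra_simps)
  show ?thesis by (rule sq_le[OF norm_ge_zero _ sq]) (use assms in simp)
qed


lemma frr_inj_t:
  assumes "frr A s"
  shows "inj (\<lambda>y. transpose A *v y)"
proof (rule injI)
  interpret frr A s by fact
  fix y1 y2 assume "transpose A *v y1 = transpose A *v y2"
  then have "transpose A *v (y1 - y2) = 0" by (simp add: matrix_vector_mult_diff_distrib)
  then have "s * norm (y1 - y2) \<le> 0" using lb[of "y1 - y2"] by simp
  then show "y1 = y2" using s_pos by (simp add: mult_le_0_iff)
qed

lemma subspace_null: "subspace {x. (A::real^'n^'m) *v x = 0}"
  by (auto simp: subspace_def matrix_vector_right_distrib matrix_vector_mult_scaleR matrix_vector_mult_0_right)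

locale two =
  J: frr J \<gamma> + T: frr Jt \<gamma>t
  for J Jt :: "real^'n^'m" and \<gamma> \<gamma>t :: real +
  fixes eJ t :: real
  assumes E: "\<And>u. norm (transpose J *v u - transpose Jt *v u) \<le> eJ * norm u"
    and t_def: "t = eJ / \<gamma>" and t1: "t < 1" and eJ0: "0 \<le> eJ"
begin

lemma t0: "0 \<le> t" using t_def eJ0 J.s_pos by simp

lemma H1: "norm (projP Jt *v (v - projP J *v v)) \<le> t * norm (v - projP J *v v)"
proof -
  define u where "u = J.G *v (J *v v)"
  have r: "v - projP J *v v = transpose J *v u" by (simp add: u_def J.r_eq)
  have "projP Jt *v (transpose J *v u) = projP Jt *v (transpose J *v u - transpose Jt *v u)"
    by (simp add: matrix_vector_mult_diff_distrib T.P_At)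
  then have "norm (projP Jt *v (transpose J *v u)) \<le> norm (transpose J *v u - transpose Jt *v u)"
    using T.P_norm by metis
  also have "\<dots> \<le> eJ * norm u" by (rule E)
  also have "\<dots> \<le> eJ * (norm (transpose J *v u) / \<gamma>)"
    using J.lb[of u] J.s_pos eJ0 by (intro mult_left_mono) (auto simp: pos_le_divide_eq mult.commute)
  also have "\<dots> = t * norm (transpose J *v u)" by (simp add: t_def)
  finally show ?thesis by (simp add: r)
qed

lemma H2: "Jt *v z = 0 \<Longrightarrow> norm (z - projP J *v z) \<le> t * norm z"
proof -
  assume z: "Jt *v z = 0"
  have "(norm (z - projP J *v z))^2 = z \<bullet> (z - projP J *v z)"
    by (metis J.rr_inner power2_norm_eq_inner)
  also have "\<dots> = (projP Jt *v z) \<bullet> (z - projP J *v z)" by (simp add: T.P_null z)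
  also have "\<dots> = z \<bullet> (projP Jt *v (z - projP J *v z))" by (rule T.P_sym)
  also have "\<dots> \<le> norm z * norm (projP Jt *v (z - projP J *v z))" by (rule norm_cauchy_schwarz)
  also have "\<dots> \<le> norm z * (t * norm (z - projP J *v z))" by (intro mult_left_mono H1) simp
  finally have sq: "(norm (z - projP J *v z))^2 \<le> norm (z - projP J *v z) * (t * norm z)"
    by (simp add: algebra_simps)
  show ?thesis by (rule sq_le[OF norm_ge_zero _ sq]) (use t0 in simp)
qed

lemma inj0: "Jt *v z = 0 \<Longrightarrow> projP J *v z = 0 \<Longrightarrow> z = 0"
proof -
  assume "Jt *v z = 0" "projP J *v z = 0"
  then have "norm z \<le> t * norm z" using H2 by fastforce
  then have "(1 - t) * norm z \<le> 0" by (simp add: algebra_simps)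
  then show "z = 0" using t1 by (simp add: mult_le_0_iff)
qed

lemma surj: "J *v y = 0 \<Longrightarrow> \<exists>z. Jt *v z = 0 \<and> projP J *v z = y"
proof -
  assume y: "J *v y = 0"
  define f where "f = (\<lambda>z. projP J *v z)"
  define N where "N = {x. J *v x = 0}"
  define Nt where "Nt = {x. Jt *v x = 0}"
  have lf: "linear f" unfolding f_def by (rule matrix_vector_mul_linear)
  have sNt: "subspace Nt" unfolding Nt_def by (rule subspace_null)
  have sN: "subspace N" unfolding N_def by (rule subspace_null)
  have spanNt: "span Nt = Nt" using sNt by (rule span_eq_iff[THEN iffD2])
  have "inj_on f Nt"
  proof (rule inj_onI)
    fix z1 z2 assume "z1 \<in> Nt" "z2 \<in> Nt" "f z1 = f z2"
    then have "Jt *v (z1 - z2) = 0" "projP J *v (z1 - z2) = 0"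
      by (auto simp: Nt_def f_def matrix_vector_mult_diff_distrib)
    then show "z1 = z2" using inj0 by fastforce
  qed
  then have "dim (f ` Nt) = dim Nt"
    using dim_image_eq[OF lf] spanNt by metis
  also have "dim Nt = dim N"
    unfolding Nt_def N_def by (rule dim_null_eq[OF frr_inj_t frr_inj_t]) (unfold_locales)
  finally have d: "dim (f ` Nt) = dim N" .
  have sub: "f ` Nt \<subseteq> N" by (auto simp: f_def N_def J.A_P)
  have "f ` Nt = N"
    by (rule subspace_dim_equal[OF real_vector.linear_subspace_image[OF lf sNt] sN sub]) (simp add: d)
  then have "y \<in> f ` Nt" using y by (simp add: N_def)
  then show ?thesis by (auto simp: f_def Nt_def)
qed


lemma H3: "J *v y = 0 \<Longrightarrow> norm (y - projP Jt *v y) \<le> t * norm y"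
proof -
  assume y: "J *v y = 0"
  obtain z where z: "Jt *v z = 0" "projP J *v z = y" using surj[OF y] by blast
  define a where "a = norm y"
  define b where "b = norm z"
  define p where "p = norm (projP Jt *v y)"
  define r where "r = norm (y - projP Jt *v y)"
  have "a^2 = (projP J *v z) \<bullet> y" by (simp add: a_def z(2) power2_norm_eq_inner)
  also have "\<dots> = z \<bullet> (projP J *v y)" by (rule J.P_sym)
  also have "\<dots> = z \<bullet> y" by (simp add: J.P_null y)
  also have "\<dots> = (projP Jt *v z) \<bullet> y" by (simp add: T.P_null z)
  also have "\<dots> = z \<bullet> (projP Jt *v y)" by (rule T.P_sym)
  also have "\<dots> \<le> b * p" unfolding b_def p_def by (rule norm_cauchy_schwarz)
  finally have h1: "a^2 \<le> b * p" .
  have "b^2 = a^2 + (norm (z - projP J *v z))^2" unfolding a_def b_def using J.P_pyth[of z] z by simp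
  also have "(norm (z - projP J *v z))^2 \<le> (t * b)^2"
    unfolding b_def using H2[OF z(1)] by (intro power_mono) auto
  finally have h2: "(1 - t^2) * b^2 \<le> a^2" by (simp add: algebra_simps power_mult_distrib)
  have h3: "a^2 = p^2 + r^2" unfolding a_def p_def r_def by (rule T.P_pyth)
  have t2: "0 \<le> 1 - t^2" using t0 t1 by (simp add: power_le_one)
  have "a^2 * a^2 \<le> (b * p)^2"
    using h1 by (metis power2_eq_square power_mono zero_le_power2)
  then have "(1 - t^2) * (a^2 * a^2) \<le> (1 - t^2) * (b^2 * p^2)"
    by (intro mult_left_mono t2) (simp add: power_mult_distrib)
  also have "\<dots> = ((1 - t^2) * b^2) * p^2" by simp
  also have "\<dots> \<le> a^2 * p^2" by (intro mult_right_mono h2) simp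
  finally have h4: "a^2 * ((1 - t^2) * a^2) \<le> a^2 * p^2" by (simp add: algebra_simps)
  have "r^2 \<le> (t * a)^2"
  proof (cases "a = 0")
    case True then show ?thesis by (simp add: a_def r_def)
  next
    case False
    then have "0 < a^2" by simp
    then have h5: "(1 - t^2) * a^2 \<le> p^2" using h4 mult_le_cancel_left_pos by blast
    have "(t*a)^2 = t^2 * a^2" by (simp add: power_mult_distrib)
    then show ?thesis using h3 h5 by (simp add: left_diff_distrib)
  qed
  then have "r \<le> t * a" by (rule power2_le_imp_le) (use t0 in \<open>simp add: a_def\<close>)
  then show ?thesis by (simp add: r_def a_def)
qed

lemma H4: "g \<bullet> (projP J *v g) - g \<bullet> (projP Jt *v g) \<le> t * (norm g)^2"
proof -
  define p where "p = projP J *v g"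
  define q where "q = g - projP J *v g"
  define pt where "pt = projP Jt *v g"
  define qt where "qt = g - projP Jt *v g"
  have eq: "g \<bullet> (projP J *v g) - g \<bullet> (projP Jt *v g) = p \<bullet> qt - q \<bullet> pt"
    by (simp add: p_def q_def pt_def qt_def inner_diff_left inner_diff_right inner_commute)
  have "p \<bullet> qt = (p - projP Jt *v p) \<bullet> qt" by (simp add: qt_def T.rr_inner)
  also have "\<dots> \<le> norm (p - projP Jt *v p) * norm qt" by (rule norm_cauchy_schwarz)
  also have "\<dots> \<le> (t * norm p) * norm qt"
    by (intro mult_right_mono H3) (simp_all add: p_def J.A_P)
  finally have e1: "p \<bullet> qt \<le> t * norm p * norm qt" .
  have "q \<bullet> pt = q \<bullet> (projP Jt *v pt)" by (simp add: pt_def T.P_idem)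
  also have "\<dots> = (projP Jt *v q) \<bullet> pt" by (rule T.P_sym[symmetric])
  finally have "- (q \<bullet> pt) \<le> norm (projP Jt *v q) * norm pt"
    using Cauchy_Schwarz_ineq2[of "projP Jt *v q" pt] by linarith
  also have "\<dots> \<le> (t * norm q) * norm pt"
    by (intro mult_right_mono) (simp_all add: q_def H1)
  finally have e2: "- (q \<bullet> pt) \<le> t * norm q * norm pt" .
  have n1: "(norm g)^2 = (norm p)^2 + (norm q)^2" unfolding p_def q_def by (rule J.P_pyth)
  have n2: "(norm g)^2 = (norm pt)^2 + (norm qt)^2" unfolding pt_def qt_def by (rule T.P_pyth)
  have "norm p * norm qt + norm q * norm pt \<le> (norm g)^2"
  proof -
    have "2 * (norm p * norm qt) \<le> (norm p)^2 + (norm qt)^2"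
      using sum_squares_bound[of "norm p" "norm qt"] by (simp add: mult.assoc)
    moreover have "2 * (norm q * norm pt) \<le> (norm q)^2 + (norm pt)^2"
      using sum_squares_bound[of "norm q" "norm pt"] by (simp add: mult.assoc)
    ultimately show ?thesis using n1 n2 by linarith
  qed
  then have "t * (norm p * norm qt + norm q * norm pt) \<le> t * (norm g)^2"
    using t0 by (intro mult_left_mono)
  then show ?thesis using eq e1 e2 by (simp add: algebra_simps)
qed
end



lemma transpose_diff: "transpose (A - B) = transpose A - (transpose B :: real^'n^'m)"
  by (simp add: transpose_def vec_eq_iff)

lemma mv_neg: "(A::real^'n^'m) *v (- x) = - (A *v x)"
  by (simp add: matrix_vector_mult_def vec_eq_iff sum_negf)

theorem corollary3p2:
  fixes f :: "real ^ 'n \<Rightarrow> real" and c :: "real ^ 'n \<Rightarrow> real ^ 'm"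
    and g :: "real ^ 'n \<Rightarrow> real ^ 'n" and J :: "real ^ 'n \<Rightarrow> real ^ 'n ^ 'm"
    and ft :: "real ^ 'n \<Rightarrow> real" and ct :: "real ^ 'n \<Rightarrow> real ^ 'm"
    and gt :: "real ^ 'n \<Rightarrow> real ^ 'n" and Jt :: "real ^ 'n \<Rightarrow> real ^ 'n ^ 'm"
    and eps_f eps_c eps_g eps_J \<gamma> b_u \<tau> \<theta>\<^sub>1 :: real
    and x d :: "nat \<Rightarrow> real ^ 'n" and \<beta> \<pi> :: "nat \<Rightarrow> real"
    and k :: nat
  assumes mn: "CARD('m) < CARD('n)"
    and f_deriv: "\<And>y. (f has_derivative (\<lambda>h. g y \<bullet> h)) (at y)"
    and c_deriv: "\<And>y. (c has_derivative (\<lambda>h. J y *v h)) (at y)"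
    and f_smooth: "continuous_on UNIV g"
    and c_smooth: "continuous_on UNIV J"
    and noise_f: "\<And>y. \<bar>ft y - f y\<bar> \<le> eps_f"
    and noise_c: "\<And>y. l1norm (ct y - c y) \<le> eps_c"
    and noise_g: "\<And>y. norm (gt y - g y) \<le> eps_g"
    and noise_J: "\<And>y. opnorm_1_2 (Jt y - J y) \<le> eps_J"
    and sigma: "\<And>j. sigma_min (J (x j)) \<ge> \<gamma>"
    and gamma: "\<gamma> > eps_J"
    and beta: "\<And>j. 0 < \<beta> j \<and> \<beta> j \<le> b_u"
    and d_feas: "\<And>j. ct (x j) + Jt (x j) *v d j = 0"
    and d_opt: "\<And>j d'. ct (x j) + Jt (x j) *v d' = 0 \<Longrightarrow>
        1/2 * \<beta> j * (norm (d j))\<^sup>2 + gt (x j) \<bullet> d j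
          \<le> 1/2 * \<beta> j * (norm d')\<^sup>2 + gt (x j) \<bullet> d'"
    and tau: "0 < \<tau>" "\<tau> < 1"
    and pi: "\<And>j. \<pi> j \<ge> 1 / (1 - \<tau>) *
        infnorm (matrix_inv (Jt (x j) ** transpose (Jt (x j))) *v (Jt (x j) *v gt (x j)))"
    and theta: "0 \<le> \<theta>\<^sub>1" "\<theta>\<^sub>1 < 1"
    and cond: "(let \<delta> = 1 / (\<gamma> - eps_J); \<eta> = 1 / \<gamma>;
                   xk = x k; bk = \<beta> k; pk = \<pi> k;
                   \<psi> = 1 / b_u * (norm (projP (J xk) *v g xk))\<^sup>2 + pk * \<tau> * l1norm (c xk);
                   E = 1 / bk * ((norm (g xk))\<^sup>2 * \<eta> * eps_J + eps_g * norm (g xk))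
                       + eps_g * \<delta> * (l1norm (c xk) + eps_c)
                       + pk * ((2 - \<tau>) * eps_c
                           + eps_J * (\<delta> * (l1norm (c xk) + eps_c)
                              + 1 / bk * (norm (projP (J xk) *v g xk)
                                          + norm (g xk) * \<eta> * eps_J + eps_g)))
               in \<psi> \<ge> E / (1 - \<theta>\<^sub>1))"
  shows "(let xk = x k; dk = d k; bk = \<beta> k; pk = \<pi> k;
              lk = g xk \<bullet> dk + pk * l1norm (c xk + J xk *v dk) - pk * l1norm (c xk);
              \<psi> = 1 / b_u * (norm (projP (J xk) *v g xk))\<^sup>2 + pk * \<tau> * l1norm (c xk);
              M = 1 / bk * (g xk \<bullet> (projP (J xk) *v g xk)) + \<tau> * pk * l1norm (c xk)
          in lk \<le> - \<theta>\<^sub>1 * M \<and> - \<theta>\<^sub>1 * M \<le> - \<theta>\<^sub>1 * \<psi>)"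
proof -
  define A where "A = J (x k)"
  define B where "B = Jt (x k)"
  define G0 where "G0 = g (x k)"
  define Gt where "Gt = gt (x k)"
  define C0 where "C0 = c (x k)"
  define Ct where "Ct = ct (x k)"
  define D where "D = d k"
  define b where "b = \<beta> k"
  define p where "p = \<pi> k"
  define \<delta> where "\<delta> = 1 / (\<gamma> - eps_J)"
  define t where "t = eps_J / \<gamma>"
  have b0: "0 < b" "b \<le> b_u" using beta[of k] by (auto simp: b_def)
  have nJ: "\<And>v. l1norm ((B - A) *v v) \<le> eps_J * norm v"
    unfolding A_def B_def by (rule opnorm_bound[OF noise_J])
  have eJ0: "0 \<le> eps_J"
  proof -
    define v :: "real^'n" where "v = (\<chi> i. 1)"
    have "v \<noteq> 0" by (simp add: v_def vec_eq_iff)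
    then have "0 < norm v" by simp
    moreover have "0 \<le> eps_J * norm v" using nJ[of v] l1_nonneg[of "(B - A) *v v"] by linarith
    ultimately show ?thesis by (simp add: zero_le_mult_iff)
  qed
  have g0: "0 < \<gamma>" using gamma eJ0 by linarith
  have nJ2: "\<And>v. norm ((B - A) *v v) \<le> eps_J * norm v"
    using nJ l1_ge_norm order_trans by blast
  have nJT: "\<And>u. norm (transpose A *v u - transpose B *v u) \<le> eps_J * norm u"
  proof -
    fix u
    have "norm (transpose (B - A) *v u) \<le> eps_J * norm u"
      by (rule transpose_bound[OF nJ2 eJ0])
    then show "norm (transpose A *v u - transpose B *v u) \<le> eps_J * norm u"
      by (simp add: transpose_diff matrix_vector_mult_diff_rdistrib norm_minus_commute)
  qed
  have lbA: "\<And>y. \<gamma> * norm y \<le> norm (transpose A *v y)"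
    unfolding A_def by (rule sigma_bound[OF sigma])
  have lbB: "\<And>y. (\<gamma> - eps_J) * norm y \<le> norm (transpose B *v y)"
  proof -
    fix y
    have "norm (transpose A *v y) \<le> norm (transpose B *v y) + norm (transpose A *v y - transpose B *v y)"
      by (metis add.commute diff_add_cancel norm_triangle_ineq)
    then show "(\<gamma> - eps_J) * norm y \<le> norm (transpose B *v y)"
      using lbA[of y] nJT[of y] by (simp add: left_diff_distrib)
  qed
  interpret TW: two A B \<gamma> "\<gamma> - eps_J" eps_J t
    by unfold_locales (use g0 gamma lbA lbB nJT eJ0 in \<open>auto simp: t_def\<close>)
  have t1: "t < 1" using gamma g0 by (simp add: t_def)
  have dpos: "0 < \<delta>" using gamma by (simp add: \<delta>_def)
  define P where "P = projP A"
  define Pt where "Pt = projP B"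
  define z where "z = transpose B *v (TW.T.G *v Ct)"
  define ds where "ds = - ((1/b) *\<^sub>R (Pt *v Gt)) - z"
  have Bz: "B *v z = Ct" by (simp add: z_def TW.T.Gv)
  have feas_s: "Ct + B *v ds = 0"
    by (simp add: ds_def Pt_def matrix_vector_mult_diff_distrib matrix_vector_mult_scaleR TW.T.A_P Bz mv_neg
        matrix_vector_mult_0_right)
  have feas: "Ct + B *v D = 0" using d_feas[of k] by (simp add: Ct_def B_def D_def)
  define h where "h = D - ds"
  have Bh: "B *v h = 0" using feas feas_s by (simp add: h_def matrix_vector_mult_diff_distrib) (metis add_left_cancel)
  have orth: "(b *\<^sub>R ds + Gt) \<bullet> h = 0"
  proof -
    have "b *\<^sub>R ds + Gt = (Gt - Pt *v Gt) - b *\<^sub>R z" using b0 by (simp add: ds_def algebra_simps)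
    also have "\<dots> = transpose B *v (TW.T.G *v (B *v Gt) - b *\<^sub>R (TW.T.G *v Ct))"
      by (simp add: Pt_def TW.T.r_eq z_def matrix_vector_mult_diff_distrib matrix_vector_mult_scaleR)
    finally show ?thesis by (metis inner_mv inner_commute Bh inner_zero_right)
  qed
  have "ct (x k) + Jt (x k) *v ds = 0" using feas_s unfolding Ct_def B_def .
  from d_opt[OF this] have opt: "1/2 * b * (norm D)^2 + Gt \<bullet> D \<le> 1/2 * b * (norm ds)^2 + Gt \<bullet> ds"
    unfolding b_def[symmetric] D_def[symmetric] Gt_def[symmetric] .
  have Dsh: "D = ds + h" by (simp add: h_def)
  have n2: "(norm D)^2 = (norm ds)^2 + 2 * (ds \<bullet> h) + (norm h)^2"
    unfolding Dsh by (simp add: power2_norm_eq_inner inner_add_left inner_add_right inner_commute)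
  have i2: "Gt \<bullet> D = Gt \<bullet> ds + Gt \<bullet> h" unfolding Dsh by (simp add: inner_add_right)
  have o2: "b * (ds \<bullet> h) + Gt \<bullet> h = 0" using orth by (simp add: inner_add_left)
  have "1/2 * b * (norm D)^2 = 1/2 * b * (norm ds)^2 + b * (ds \<bullet> h) + 1/2 * b * (norm h)^2"
    unfolding n2 by (simp add: algebra_simps)
  then have "1/2 * b * (norm h)^2 \<le> 0" using opt i2 o2 by linarith
  then have "b * (norm h)^2 \<le> 0" by simp
  then have "h = 0" using b0 by (simp add: mult_le_0_iff)
  then have Dds: "D = ds" by (simp add: h_def)
  have eg0: "0 \<le> eps_g" using noise_g[of "x k"] norm_ge_zero order_trans by blast
  have ec0: "0 \<le> eps_c" using noise_c[of "x k"] l1_nonneg order_trans by blast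
  define w where "w = TW.T.G *v (B *v Gt)"
  define L where "L = l1norm C0 + eps_c"
  have Gw: "w = matrix_inv (Jt (x k) ** transpose (Jt (x k))) *v (Jt (x k) *v gt (x k))"
    unfolding w_def TW.T.G_def unfolding B_def Gt_def ..
  have p0: "infnorm w \<le> (1 - \<tau>) * p"
    using pi[of k] tau unfolding Gw[symmetric] p_def[symmetric] by (simp add: field_simps)
  have "0 \<le> (1 - \<tau>) * p" using p0 infnorm_pos_le[of w] by linarith
  then have pnn: "0 \<le> p" using tau by (simp add: zero_le_mult_iff)
  have gD: "G0 \<bullet> D = -(1/b) * (G0 \<bullet> (Pt *v Gt)) - G0 \<bullet> z"
    by (simp add: Dds ds_def inner_diff_right)
  have gz: "G0 \<bullet> z = w \<bullet> Ct + (G0 - Gt) \<bullet> z"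
  proof -
    have "Gt \<bullet> z = w \<bullet> Ct"
      by (simp add: z_def w_def) (metis inner_mv inner_commute TW.T.G_inner)
    then show ?thesis by (simp add: inner_diff_left)
  qed
  have l1Ct: "l1norm Ct \<le> L"
  proof -
    have "l1norm Ct \<le> l1norm C0 + l1norm (Ct - C0)"
      using l1_triangle[of C0 "Ct - C0"] by simp
    then show ?thesis using noise_c[of "x k"] by (simp add: L_def Ct_def C0_def)
  qed
  have L0: "0 \<le> L" using l1Ct l1_nonneg[of Ct] by linarith
  have b1: "- (w \<bullet> Ct) \<le> (1 - \<tau>) * p * L"
  proof -
    have "- (w \<bullet> Ct) \<le> infnorm w * l1norm Ct" using inner_infnorm[of w Ct] by linarith
    also have "\<dots> \<le> (1 - \<tau>) * p * l1norm Ct" by (intro mult_right_mono p0 l1_nonneg)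
    also have "\<dots> \<le> (1 - \<tau>) * p * L" using tau pnn by (intro mult_left_mono l1Ct) auto
    finally show ?thesis .
  qed
  have b3: "norm z \<le> \<delta> * L"
  proof -
    have "norm z \<le> norm Ct / (\<gamma> - eps_J)" unfolding z_def by (rule TW.T.pinv_bound)
    also have "\<dots> = \<delta> * norm Ct" by (simp add: \<delta>_def)
    also have "\<dots> \<le> \<delta> * L" using dpos l1Ct l1_ge_norm[of Ct] by (intro mult_left_mono) auto
    finally show ?thesis .
  qed
  have b4: "- ((G0 - Gt) \<bullet> z) \<le> eps_g * (\<delta> * L)"
  proof -
    have "- ((G0 - Gt) \<bullet> z) \<le> norm (G0 - Gt) * norm z" using Cauchy_Schwarz_ineq2[of "G0 - Gt" z] by linarith
    also have "\<dots> \<le> eps_g * (\<delta> * L)"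
      using noise_g[of "x k"] b3 eg0 by (intro mult_mono) (auto simp: G0_def Gt_def norm_minus_commute)
    finally show ?thesis .
  qed
  have b5: "norm (Pt *v Gt) \<le> norm (P *v G0) + t * norm G0 + eps_g"
  proof -
    have e0: "Pt *v (P *v G0) + Pt *v (G0 - P *v G0) + Pt *v (Gt - G0) = Pt *v (P *v G0 + (G0 - P *v G0) + (Gt - G0))"
      by (simp only: matrix_vector_right_distrib)
    have e: "Pt *v Gt = Pt *v (P *v G0) + Pt *v (G0 - P *v G0) + Pt *v (Gt - G0)"
      unfolding e0 by simp
    have "norm (Pt *v Gt) \<le> norm (Pt *v (P *v G0)) + norm (Pt *v (G0 - P *v G0)) + norm (Pt *v (Gt - G0))"
      unfolding e using norm_triangle_ineq[of "Pt *v (P *v G0) + Pt *v (G0 - P *v G0)" "Pt *v (Gt - G0)"]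
        norm_triangle_ineq[of "Pt *v (P *v G0)" "Pt *v (G0 - P *v G0)"] by linarith
    moreover have "norm (Pt *v (P *v G0)) \<le> norm (P *v G0)" unfolding Pt_def by (rule TW.T.P_norm)
    moreover have "norm (Pt *v (G0 - P *v G0)) \<le> t * norm G0"
    proof -
      have "norm (Pt *v (G0 - P *v G0)) \<le> t * norm (G0 - P *v G0)" unfolding Pt_def P_def by (rule TW.H1)
      also have "\<dots> \<le> t * norm G0" using TW.t0 by (intro mult_left_mono) (auto simp: P_def TW.J.r_norm)
      finally show ?thesis .
    qed
    moreover have "norm (Pt *v (Gt - G0)) \<le> eps_g"
      using TW.T.P_norm[of "Gt - G0"] noise_g[of "x k"] by (simp add: Pt_def Gt_def G0_def)
    ultimately show ?thesis by linarith
  qed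
  define Db where "Db = 1/b * (norm (P *v G0) + t * norm G0 + eps_g) + \<delta> * L"
  have b6: "norm D \<le> Db"
  proof -
    have "norm D \<le> norm ((1/b) *\<^sub>R (Pt *v Gt)) + norm z"
      unfolding Dds ds_def using norm_triangle_ineq4[of "- ((1/b) *\<^sub>R (Pt *v Gt))" z] by (simp only: norm_minus_cancel)
    also have "norm ((1/b) *\<^sub>R (Pt *v Gt)) = 1/b * norm (Pt *v Gt)" using b0 by simp
    also have "1/b * norm (Pt *v Gt) \<le> 1/b * (norm (P *v G0) + t * norm G0 + eps_g)"
      using b0 b5 by (intro mult_left_mono) auto
    finally show ?thesis using b3 by (simp add: Db_def)
  qed
  have b7: "l1norm (C0 + A *v D) \<le> eps_c + eps_J * Db"
  proof -
    have "C0 + A *v D = (C0 - Ct) - ((B - A) *v D)"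
      using feas by (simp add: matrix_vector_mult_diff_rdistrib algebra_simps eq_neg_iff_add_eq_0)
    then have "l1norm (C0 + A *v D) \<le> l1norm (C0 - Ct) + l1norm (- ((B - A) *v D))"
      using l1_triangle by (metis diff_conv_add_uminus)
    also have "l1norm (- ((B - A) *v D)) = l1norm ((B - A) *v D)" by (simp add: l1norm_def)
    also have "l1norm (C0 - Ct) \<le> eps_c" using noise_c[of "x k"] by (simp add: l1_minus_commute C0_def Ct_def)
    also have "l1norm ((B - A) *v D) \<le> eps_J * norm D" by (rule nJ)
    also have "eps_J * norm D \<le> eps_J * Db" using eJ0 b6 by (intro mult_left_mono)
    finally show ?thesis by simp
  qed
  have b8: "G0 \<bullet> (Pt *v Gt) \<ge> G0 \<bullet> (P *v G0) - t * (norm G0)^2 - norm G0 * eps_g"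
  proof -
    have "G0 \<bullet> (Pt *v Gt) = G0 \<bullet> (Pt *v G0) + G0 \<bullet> (Pt *v (Gt - G0))"
      by (simp add: matrix_vector_mult_diff_distrib inner_diff_right)
    moreover have "- (G0 \<bullet> (Pt *v (Gt - G0))) \<le> norm G0 * eps_g"
    proof -
      have "- (G0 \<bullet> (Pt *v (Gt - G0))) \<le> norm G0 * norm (Pt *v (Gt - G0))"
        using Cauchy_Schwarz_ineq2[of G0 "Pt *v (Gt - G0)"] by linarith
      also have "\<dots> \<le> norm G0 * eps_g"
        using TW.T.P_norm[of "Gt - G0"] noise_g[of "x k"]
        by (intro mult_left_mono) (auto simp: Pt_def Gt_def G0_def)
      finally show ?thesis .
    qed
    moreover have "G0 \<bullet> (P *v G0) - G0 \<bullet> (Pt *v G0) \<le> t * (norm G0)^2"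
      unfolding P_def Pt_def by (rule TW.H4)
    ultimately show ?thesis by linarith
  qed
  have gP: "G0 \<bullet> (P *v G0) = (norm (P *v G0))^2" unfolding P_def by (rule TW.J.P_inner)
  define Ev where "Ev = 1 / b * ((norm G0)\<^sup>2 * (1 / \<gamma>) * eps_J + eps_g * norm G0)
                       + eps_g * \<delta> * (l1norm C0 + eps_c)
                       + p * ((2 - \<tau>) * eps_c
                           + eps_J * (\<delta> * (l1norm C0 + eps_c)
                              + 1 / b * (norm (P *v G0)
                                          + norm G0 * (1 / \<gamma>) * eps_J + eps_g)))"
  define Mv where "Mv = 1 / b * (G0 \<bullet> (P *v G0)) + \<tau> * p * l1norm C0"
  define \<psi> where "\<psi> = 1 / b_u * (norm (P *v G0))\<^sup>2 + p * \<tau> * l1norm C0"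
  have main: "G0 \<bullet> D + p * l1norm (C0 + A *v D) - p * l1norm C0 \<le> - Mv + Ev"
  proof -
    have "(1/b) * (G0 \<bullet> (P *v G0) - t * (norm G0)^2 - norm G0 * eps_g) \<le> (1/b) * (G0 \<bullet> (Pt *v Gt))"
      by (intro mult_left_mono b8) (use b0 in simp)
    then have e1: "-(1/b) * (G0 \<bullet> (Pt *v Gt)) \<le> -((1/b) * (G0 \<bullet> (P *v G0))) + (1/b) * (t * (norm G0)^2) + (1/b) * (norm G0 * eps_g)"
      by (simp add: right_diff_distrib)
    have e4: "p * l1norm (C0 + A *v D) \<le> p * (eps_c + eps_J * Db)"
      by (intro mult_left_mono b7 pnn)
    have ev: "Ev = (1/b) * (t * (norm G0)^2) + (1/b) * (norm G0 * eps_g) + eps_g * (\<delta> * L) + (1 - \<tau>) * p * L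
        + p * (eps_c + eps_J * Db) - p * l1norm C0 + \<tau> * p * l1norm C0"
      by (simp add: Ev_def Db_def L_def t_def algebra_simps)
    show ?thesis using gD gz e1 e4 ev b1 b4 unfolding Mv_def by linarith
  qed
  have Mpsi: "\<psi> \<le> Mv"
  proof -
    have "1 / b_u \<le> 1 / b" using b0 by (simp add: frac_le)
    then have "1 / b_u * (norm (P *v G0))\<^sup>2 \<le> 1 / b * (norm (P *v G0))\<^sup>2" by (intro mult_right_mono) simp_all
    then show ?thesis unfolding \<psi>_def Mv_def gP by (simp add: mult.commute mult.left_commute)
  qed
  have condE: "Ev \<le> (1 - \<theta>\<^sub>1) * \<psi>"
  proof -
    have "\<psi> \<ge> Ev / (1 - \<theta>\<^sub>1)"
      using cond unfolding Let_def A_def[symmetric] B_def[symmetric] G0_def[symmetric] C0_def[symmetric]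
        b_def[symmetric] p_def[symmetric] \<delta>_def[symmetric] P_def[symmetric] Ev_def[symmetric] \<psi>_def[symmetric] .
    then show ?thesis using theta by (simp add: pos_divide_le_eq mult.commute)
  qed
  have "(1 - \<theta>\<^sub>1) * \<psi> \<le> (1 - \<theta>\<^sub>1) * Mv" using Mpsi theta by (intro mult_left_mono) auto
  then have r1: "G0 \<bullet> D + p * l1norm (C0 + A *v D) - p * l1norm C0 \<le> - \<theta>\<^sub>1 * Mv"
    using main condE by (simp add: algebra_simps)
  have r2: "- \<theta>\<^sub>1 * Mv \<le> - \<theta>\<^sub>1 * \<psi>" using Mpsi theta by (simp add: mult_left_mono)
  show ?thesis
    unfolding Let_def A_def[symmetric] B_def[symmetric] G0_def[symmetric] C0_def[symmetric] D_def[symmetric]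
        b_def[symmetric] p_def[symmetric] P_def[symmetric] Mv_def[symmetric] \<psi>_def[symmetric]
    using r1 r2 by simp
qed

end
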